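(* Let $p>1$, $1/p+1/q=1$, let $\{(x_i,y_i)\}_{i=1}^n\subset\mathbb{R}^d\times\{\pm1\}$ be linearly separable with $\max_i\|x_i\|_q<C$, and let $L(w)=\frac1n\sum_i\ell(y_i\langle w,x_i\rangle)$ with $\ell$ differentiable, decreasing, convex, not attaining its minimum, $\inf\ell=0$. Assume the regularized direction $\bar w^{\mathrm{reg}}_p$ exists. Let $\alpha>0$ and let $r_\alpha$ be such that $L((1+\alpha)\|w\|_p\bar w^{\mathrm{reg}}_p)\le L(w)$ for all $w$ with $\|w\|_p>r_\alpha$. Then for every $w$ with $\|w\|_p>r_\alpha$, $$\langle\nabla L(w),w\rangle\ge(1+\alpha)\|w\|_p\,\langle\nabla L(w),\bar w^{\mathrm{reg}}_p\rangle.$$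
   Context: The regularized direction is $\bar w^{\mathrm{reg}}_p=\lim_{B\to\infty}\bar w_p(B)/B$, where $\bar w_p(B)=\arg\min_{\|w\|_p\le B}L(w)$. *)

theory Defs
  imports "HOL-Analysis.Analysis"
begin

definition pnorm :: "real \<Rightarrow> real ^ 'd \<Rightarrow> real" where
  "pnorm p w = (\<Sum>i\<in>UNIV. \<bar>w $ i\<bar> powr p) powr (1 / p)"

definition emp_loss ::
  "(real \<Rightarrow> real) \<Rightarrow> nat \<Rightarrow> (nat \<Rightarrow> real ^ 'd) \<Rightarrow> (nat \<Rightarrow> real) \<Rightarrow> real ^ 'd \<Rightarrow> real" where
  "emp_loss l n x y w = (1 / real n) * (\<Sum>i<n. l (y i * (w \<bullet> x i)))"

definition reg_dir :: "real \<Rightarrow> (real ^ 'd \<Rightarrow> real) \<Rightarrow> real ^ 'd \<Rightarrow> bool" where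
  "reg_dir p L wbar \<longleftrightarrow>
     (\<exists>wB :: real \<Rightarrow> real ^ 'd.
        (\<forall>B>0. pnorm p (wB B) \<le> B \<and> (\<forall>v. pnorm p v \<le> B \<longrightarrow> L (wB B) \<le> L v)) \<and>
        ((\<lambda>B. (1 / B) *\<^sub>R wB B) \<longlongrightarrow> wbar) at_top)"

end

theory Submission
  imports Defs
begin

lemma conv_affine_comp:
  fixes l :: "real \<Rightarrow> real"
  assumes "convex_on UNIV l"
  shows "convex_on UNIV (\<lambda>t. l (a + t * b))"
proof (rule convex_onI)
  fix s t1 t2 :: real
  assume s: "0 < s" "s < 1"
  have "a + ((1 - s) *\<^sub>R t1 + s *\<^sub>R t2) * b = (1 - s) *\<^sub>R (a + t1 * b) + s *\<^sub>R (a + t2 * b)"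
    by (simp add: algebra_simps)
  moreover have "l ((1 - s) *\<^sub>R (a + t1 * b) + s *\<^sub>R (a + t2 * b)) \<le> (1 - s) * l (a + t1 * b) + s * l (a + t2 * b)"
    using convex_onD[OF assms, of s] s by simp
  ultimately show "l (a + ((1 - s) *\<^sub>R t1 + s *\<^sub>R t2) * b) \<le> (1 - s) * l (a + t1 * b) + s * l (a + t2 * b)"
    by simp
qed simp

lemma conv_sum:
  fixes f :: "nat \<Rightarrow> real \<Rightarrow> real"
  assumes "\<And>i. convex_on UNIV (f i)"
  shows "convex_on UNIV (\<lambda>t. \<Sum>i\<in>S. f i t)"
proof (cases "finite S")
  case True
  then show ?thesis
  proof (induction S rule: finite_induct)
    case empty
    then show ?case by (simp add: convex_on_const)
  next
    case (insert j S)
    then show ?case using convex_on_add[OF assms[of j] insert.IH] by simp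
  qed
next
  case False
  then show ?thesis by (simp add: convex_on_const)
qed

theorem corollary1:
  fixes p q C \<alpha> r :: real
    and n :: nat
    and x :: "nat \<Rightarrow> real ^ 'd"
    and y :: "nat \<Rightarrow> real"
    and l :: "real \<Rightarrow> real"
    and wbar :: "real ^ 'd"
  assumes p: "p > 1"
    and q: "1 / p + 1 / q = 1"
    and n: "n \<ge> 1"
    and labels: "\<forall>i<n. y i \<in> {-1, 1}"
    and separable: "\<exists>w. \<forall>i<n. y i * (w \<bullet> x i) > 0"
    and bounded: "\<forall>i<n. pnorm q (x i) < C"
    and l_diff: "\<forall>t. l differentiable (at t)"
    and l_decr: "\<forall>s t. s < t \<longrightarrow> l t < l s"
    and l_convex: "convex_on UNIV l"
    and l_nomin: "\<forall>t. \<exists>s. l s < l t"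
    and l_inf: "(INF t. l t) = 0"
    and regdir: "reg_dir p (emp_loss l n x y) wbar"
    and alpha: "\<alpha> > 0"
    and r_alpha: "\<forall>w. pnorm p w > r \<longrightarrow>
                   emp_loss l n x y (((1 + \<alpha>) * pnorm p w) *\<^sub>R wbar) \<le> emp_loss l n x y w"
  shows "\<forall>w g. pnorm p w > r \<longrightarrow> (emp_loss l n x y has_derivative (\<lambda>h. g \<bullet> h)) (at w) \<longrightarrow>
           g \<bullet> w \<ge> (1 + \<alpha>) * pnorm p w * (g \<bullet> wbar)"
proof (intro allI impI)
  fix w g :: "real ^ 'd"
  assume wr: "pnorm p w > r"
    and dL: "(emp_loss l n x y has_derivative (\<lambda>h. g \<bullet> h)) (at w)"
  define L where "L = emp_loss l n x y"
  define v where "v = ((1 + \<alpha>) * pnorm p w) *\<^sub>R wbar"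
  define d where "d = v - w"
  define \<phi> where "\<phi> = (\<lambda>t::real. L (w + t *\<^sub>R d))"
  have Lv: "L v \<le> L w" using r_alpha wr unfolding L_def v_def by blast
  have phi_eq: "\<phi> = (\<lambda>t. (1 / real n) * (\<Sum>i<n. l (y i * (w \<bullet> x i) + t * (y i * (d \<bullet> x i)))))"
    by (rule ext) (simp add: \<phi>_def L_def emp_loss_def inner_add_left algebra_simps)
  have conv: "convex_on UNIV \<phi>"
    unfolding phi_eq
    by (rule convex_on_cmul) (auto intro!: conv_sum conv_affine_comp l_convex)
  have lin: "((\<lambda>t::real. w + t *\<^sub>R d) has_derivative (\<lambda>h. h *\<^sub>R d)) (at 0)"
    by (auto intro!: derivative_eq_intros)
  have "((L \<circ> (\<lambda>t. w + t *\<^sub>R d)) has_derivative ((\<lambda>h. g \<bullet> h) \<circ> (\<lambda>h. h *\<^sub>R d))) (at 0)"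
    by (rule diff_chain_at[OF lin]) (use dL in \<open>simp add: L_def\<close>)
  moreover have "((\<lambda>h. g \<bullet> h) \<circ> (\<lambda>h::real. h *\<^sub>R d)) = (*) (g \<bullet> d)"
    by (rule ext) (simp add: algebra_simps)
  ultimately have "(\<phi> has_field_derivative (g \<bullet> d)) (at 0)"
    unfolding has_field_derivative_def \<phi>_def by (simp add: o_def)
  then have "\<phi> 1 - \<phi> 0 \<ge> (g \<bullet> d) * (1 - 0)"
    by (intro convex_on_imp_above_tangent[OF conv]) auto
  moreover have "\<phi> 1 = L v" "\<phi> 0 = L w" by (simp_all add: \<phi>_def d_def)
  ultimately have "g \<bullet> d \<le> 0" using Lv by simp
  then show "g \<bullet> w \<ge> (1 + \<alpha>) * pnorm p w * (g \<bullet> wbar)"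
    by (simp add: d_def v_def inner_diff_right)
qed

end
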